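(* For every $\varepsilon>0$ there exists a unit-cost $k$-of-$n$ instance $I$ of Stochastic Score Classification (i.e., $B=2$, $c_j=1$ for all $j$, and $p_j\in(0,1)$ for all $j$) such that $$\mathbb{E}[\mathrm{cost}(\overline{\mathrm{OPT}},I)]\ge\left(\tfrac32-\varepsilon\right)\cdot\mathbb{E}[\mathrm{cost}(\mathrm{OPT},I)],$$ where $\overline{\mathrm{OPT}}$ is an optimal non-adaptive strategy and $\mathrm{OPT}$ an optimal adaptive strategy for $I$.
   Context: An instance $I$ of Stochastic Score Classification (SSC) consists of tests $N=\{1,\dots,n\}$, costs $c_j\ge 0$, success probabilities $p_j\in(0,1)$, and integers $0=t_1<t_2<\dots<t_B<t_{B+1}=n+1$. The outcome vector $x\in\{0,1\}^N$ has independent coordinates with $\Pr[x_j=1]=p_j$. The score $f(x)$ is the unique $i$ with $t_i\le\|x\|_1\le t_{i+1}-1$. A $k$-of-$n$ instance is one with $B=2$ and $t_2=k$. A (possibly adaptive) strategy conducts tests one at a time, each at most once, the choice of the next test possibly depending on outcomes observed so far, and stops as soon as $f(x)$ is determined (all $x'$ agreeing with $x$ on the conducted tests have $f(x')=f(x)$). A non-adaptive strategy is a fixed permutation of $N$: tests are conducted in this order until $f(x)$ is determined. $\mathrm{cost}(S,I)$ is the random total cost of tests conducted by $S$. $\mathrm{OPT}$ (resp. $\overline{\mathrm{OPT}}$) minimizes $\mathbb{E}[\mathrm{cost}(S,I)]$ over all adaptive (resp. non-adaptive) strategies. *)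

theory Defs
  imports Complex_Main
begin

text \<open>Tests are indexed by 0..<n (the paper's 1..n shifted).
  Thresholds: the list t = [t_1, ..., t_B] with t_1 = 0, strictly increasing, t_B <= n
  (t_{B+1} = n+1 is implicit).\<close>

definition outcomes :: "nat \<Rightarrow> (nat \<Rightarrow> bool) set" where
  "outcomes n = {x. \<forall>j. n \<le> j \<longrightarrow> \<not> x j}"

definition ones :: "nat \<Rightarrow> (nat \<Rightarrow> bool) \<Rightarrow> nat" where
  "ones n x = card {j \<in> {0..<n}. x j}"

definition valid_thresholds :: "nat list \<Rightarrow> nat \<Rightarrow> bool" where
  "valid_thresholds t n \<longleftrightarrow> t \<noteq> [] \<and> t ! 0 = 0 \<and> sorted_wrt (<) t \<and> last t \<le> n"

text \<open>Score: the unique i in 1..B with t_i <= |x| <= t_{i+1} - 1 (for valid thresholds this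
  is the number of thresholds that are <= |x|).\<close>
definition score :: "nat list \<Rightarrow> nat \<Rightarrow> (nat \<Rightarrow> bool) \<Rightarrow> nat" where
  "score t n x = card {i \<in> {1..length t}. t ! (i - 1) \<le> ones n x}"

definition prob :: "(nat \<Rightarrow> real) \<Rightarrow> nat \<Rightarrow> (nat \<Rightarrow> bool) \<Rightarrow> real" where
  "prob p n x = (\<Prod>j<n. if x j then p j else 1 - p j)"

text \<open>A history is a partial map from conducted tests to their observed outcomes.\<close>
definition consistent :: "(nat \<Rightarrow> bool option) \<Rightarrow> (nat \<Rightarrow> bool) \<Rightarrow> bool" where
  "consistent h x \<longleftrightarrow> (\<forall>j b. h j = Some b \<longrightarrow> x j = b)"

definition determined :: "nat list \<Rightarrow> nat \<Rightarrow> (nat \<Rightarrow> bool option) \<Rightarrow> bool" where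
  "determined t n h \<longleftrightarrow>
     (\<forall>x\<in>outcomes n. \<forall>y\<in>outcomes n. consistent h x \<and> consistent h y \<longrightarrow> score t n x = score t n y)"

definition restrict_hist :: "(nat \<Rightarrow> bool) \<Rightarrow> nat set \<Rightarrow> (nat \<Rightarrow> bool option)" where
  "restrict_hist x S = (\<lambda>j. if j \<in> S then Some (x j) else None)"

text \<open>Adaptive strategy: maps the history observed so far to the next test to conduct.
  Valid: whenever the score is not yet determined, the next test is a new test in N.\<close>
definition valid_adaptive :: "nat list \<Rightarrow> nat \<Rightarrow> ((nat \<Rightarrow> bool option) \<Rightarrow> nat) \<Rightarrow> bool" where
  "valid_adaptive t n \<sigma> \<longleftrightarrow>
     (\<forall>h. dom h \<subseteq> {0..<n} \<and> \<not> determined t n h \<longrightarrow> \<sigma> h < n \<and> \<sigma> h \<notin> dom h)"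

fun run :: "nat list \<Rightarrow> nat \<Rightarrow> ((nat \<Rightarrow> bool option) \<Rightarrow> nat) \<Rightarrow> (nat \<Rightarrow> bool)
             \<Rightarrow> nat \<Rightarrow> (nat \<Rightarrow> bool option) \<Rightarrow> (nat \<Rightarrow> bool option)" where
  "run t n \<sigma> x 0 h = h"
| "run t n \<sigma> x (Suc m) h =
     (if determined t n h then h else run t n \<sigma> x m (h(\<sigma> h \<mapsto> x (\<sigma> h))))"

definition adaptive_cost :: "(nat \<Rightarrow> real) \<Rightarrow> nat list \<Rightarrow> nat \<Rightarrow> ((nat \<Rightarrow> bool option) \<Rightarrow> nat)
                             \<Rightarrow> (nat \<Rightarrow> bool) \<Rightarrow> real" where
  "adaptive_cost c t n \<sigma> x = (\<Sum>j\<in>dom (run t n \<sigma> x n Map.empty). c j)"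

definition expected_adaptive :: "(nat \<Rightarrow> real) \<Rightarrow> (nat \<Rightarrow> real) \<Rightarrow> nat list \<Rightarrow> nat
                                 \<Rightarrow> ((nat \<Rightarrow> bool option) \<Rightarrow> nat) \<Rightarrow> real" where
  "expected_adaptive c p t n \<sigma> = (\<Sum>x\<in>outcomes n. prob p n x * adaptive_cost c t n \<sigma> x)"

text \<open>Non-adaptive strategy: a permutation of N (as a list); tests are conducted in this
  order until the score is determined.\<close>
definition valid_nonadaptive :: "nat \<Rightarrow> nat list \<Rightarrow> bool" where
  "valid_nonadaptive n \<pi> \<longleftrightarrow> distinct \<pi> \<and> set \<pi> = {0..<n}"

definition na_stop :: "nat list \<Rightarrow> nat \<Rightarrow> nat list \<Rightarrow> (nat \<Rightarrow> bool) \<Rightarrow> nat" where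
  "na_stop t n \<pi> x = (LEAST m. determined t n (restrict_hist x (set (take m \<pi>))))"

definition na_cost :: "(nat \<Rightarrow> real) \<Rightarrow> nat list \<Rightarrow> nat \<Rightarrow> nat list \<Rightarrow> (nat \<Rightarrow> bool) \<Rightarrow> real" where
  "na_cost c t n \<pi> x = (\<Sum>j\<in>set (take (na_stop t n \<pi> x) \<pi>). c j)"

definition expected_nonadaptive :: "(nat \<Rightarrow> real) \<Rightarrow> (nat \<Rightarrow> real) \<Rightarrow> nat list \<Rightarrow> nat
                                    \<Rightarrow> nat list \<Rightarrow> real" where
  "expected_nonadaptive c p t n \<pi> = (\<Sum>x\<in>outcomes n. prob p n x * na_cost c t n \<pi> x)"

definition OPT :: "(nat \<Rightarrow> real) \<Rightarrow> (nat \<Rightarrow> real) \<Rightarrow> nat list \<Rightarrow> nat \<Rightarrow> real" where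
  "OPT c p t n = Inf (expected_adaptive c p t n ` {\<sigma>. valid_adaptive t n \<sigma>})"

definition OPT_na :: "(nat \<Rightarrow> real) \<Rightarrow> (nat \<Rightarrow> real) \<Rightarrow> nat list \<Rightarrow> nat \<Rightarrow> real" where
  "OPT_na c p t n = Inf (expected_nonadaptive c p t n ` {\<pi>. valid_nonadaptive n \<pi>})"

end

theory Submission
  imports Defs
begin
lemma outcomes_img: "outcomes n = (\<lambda>S j. j \<in> S) ` Pow {0..<n}"
proof (rule set_eqI, rule iffI)
  fix x assume "x \<in> outcomes n"
  then have "x = (\<lambda>j. j \<in> {j. x j})" and "{j. x j} \<in> Pow {0..<n}"
    by (auto simp: outcomes_def) (meson not_le)
  then show "x \<in> (\<lambda>S j. j \<in> S) ` Pow {0..<n}" by blast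
qed (auto simp: outcomes_def)

lemma finite_outcomes: "finite (outcomes n)"
  by (simp add: outcomes_img)

lemma sum_prob:
  assumes "\<And>j. j < n \<Longrightarrow> 0 \<le> p j \<and> p j \<le> 1"
  shows "(\<Sum>x\<in>outcomes n. prob p n x) = 1"
proof -
  have inj: "inj_on (\<lambda>S j. j \<in> S) (Pow {0..<n})"
    by (rule inj_onI) (auto dest: fun_cong)
  have "(\<Sum>x\<in>outcomes n. prob p n x) = (\<Sum>S\<in>Pow {0..<n}. prob p n (\<lambda>j. j \<in> S))"
    unfolding outcomes_img by (simp add: sum.reindex[OF inj])
  also have "\<dots> = (\<Sum>S\<in>Pow {0..<n}. (\<Prod>j\<in>S. p j) * (\<Prod>j\<in>{0..<n}-S. 1 - p j))"
  proof (rule sum.cong[OF refl])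
    fix S assume "S \<in> Pow {0..<n}"
    then have "{0..<n} \<inter> {j. j \<in> S} = S" "{0..<n} \<inter> - {j. j \<in> S} = {0..<n} - S" by auto
    then show "prob p n (\<lambda>j. j \<in> S) = (\<Prod>j\<in>S. p j) * (\<Prod>j\<in>{0..<n}-S. 1 - p j)"
      unfolding prob_def lessThan_atLeast0 by (simp add: prod.If_cases)
  qed
  also have "\<dots> = (\<Prod>j\<in>{0..<n}. p j + (1 - p j))"
    by (rule prod_add[symmetric]) simp
  finally show ?thesis by simp
qed

lemma score2: "0 < k \<Longrightarrow> score [0, k] n x = (if k \<le> ones n x then 2 else 1)"
proof -
  assume "0 < k"
  have "{i \<in> {1..length [0,k]}. [0, k] ! (i - 1) \<le> ones n x} = (if k \<le> ones n x then {1,2} else {1})"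
    by (auto simp: le_Suc_eq)
  then show ?thesis by (simp add: score_def)
qed

lemma determined_full:
  assumes "{0..<n} \<subseteq> dom h" shows "determined t n h"
  unfolding determined_def
proof (intro ballI impI)
  fix x y assume xy: "x \<in> outcomes n" "y \<in> outcomes n" "consistent h x \<and> consistent h y"
  have "x = y"
  proof
    fix j show "x j = y j"
    proof (cases "j < n")
      case True then obtain b where "h j = Some b" using assms by auto
      then show ?thesis using xy by (simp add: consistent_def)
    next
      case False then show ?thesis using xy by (simp add: outcomes_def)
    qed
  qed
  then show "score t n x = score t n y" by simp
qed

lemma dom_restrict[simp]: "dom (restrict_hist x S) = S"
  by (auto simp: restrict_hist_def dom_def)

lemma consistent_restrict[simp]: "consistent (restrict_hist x S) y \<longleftrightarrow> (\<forall>j\<in>S. y j = x j)"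
  by (auto simp: consistent_def restrict_hist_def)

lemma run_dom:
  assumes "valid_adaptive t n \<sigma>" "dom h \<subseteq> {0..<n}"
  shows "dom (run t n \<sigma> x r h) \<subseteq> {0..<n}"
  using assms(2)
proof (induction r arbitrary: h)
  case 0 then show ?case by simp
next
  case (Suc r)
  show ?case
  proof (cases "determined t n h")
    case True then show ?thesis using Suc by simp
  next
    case False
    then have "\<sigma> h < n" using assms(1) Suc.prems by (auto simp: valid_adaptive_def)
    then have "dom (h(\<sigma> h \<mapsto> x (\<sigma> h))) \<subseteq> {0..<n}" using Suc.prems by auto
    from Suc.IH[OF this] show ?thesis using False by (simp add: fun_upd_def)
  qed
qed

lemma run_prefix:
  assumes "\<forall>i<L. \<sigma> (restrict_hist x (set (take i \<pi>))) = \<pi> ! i"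
    and "determined t n (restrict_hist x (set (take L \<pi>)))" "L \<le> length \<pi>"
  shows "i \<le> L \<Longrightarrow> dom (run t n \<sigma> x r (restrict_hist x (set (take i \<pi>)))) \<subseteq> set (take L \<pi>)"
proof (induction r arbitrary: i)
  case 0 then show ?case by (simp add: set_take_subset_set_take)
next
  case (Suc r)
  show ?case
  proof (cases "determined t n (restrict_hist x (set (take i \<pi>)))")
    case True then show ?thesis using Suc by (simp add: set_take_subset_set_take)
  next
    case False
    then have "i < L" using Suc.prems assms(2) by (cases "i = L") auto
    then have s: "\<sigma> (restrict_hist x (set (take i \<pi>))) = \<pi> ! i" using assms(1) by auto
    have "(restrict_hist x (set (take i \<pi>)))(\<pi> ! i \<mapsto> x (\<pi> ! i)) = restrict_hist x (set (take (Suc i) \<pi>))"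
      using \<open>i < L\<close> assms(3) by (auto simp: restrict_hist_def take_Suc_conv_app_nth fun_eq_iff)
    then show ?thesis using False s Suc.IH[of "Suc i"] \<open>i < L\<close> by simp
  qed
qed

lemma filter_take: "distinct \<pi> \<Longrightarrow> filter (\<lambda>j. j \<notin> set (take i \<pi>)) \<pi> = drop i \<pi>"
proof -
  assume d: "distinct \<pi>"
  have "filter (\<lambda>j. j \<notin> set (take i \<pi>)) \<pi> = filter (\<lambda>j. j \<notin> set (take i \<pi>)) (take i \<pi> @ drop i \<pi>)" by simp
  also have "\<dots> = drop i \<pi>"
    using d set_take_disj_set_drop_if_distinct[of \<pi> i i]
    by (simp only: filter_append) (auto simp: filter_id_conv)
  finally show ?thesis .
qed

definition "xa (m::nat) = (\<lambda>j::nat. j \<le> m)"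
definition "xb (m::nat) = (\<lambda>j::nat. 1 \<le> j \<and> j \<le> m)"
definition "pi1 (m::nat) = [0..<Suc (2*m)]"
definition "pi0 (m::nat) = 0 # [Suc m..<Suc (2*m)] @ [1..<Suc m]"
definition "sig m h = hd (filter (\<lambda>j. j \<notin> dom h) (if h 0 = Some True then pi1 m else pi0 m))"

lemma xa_out: "xa m \<in> outcomes (Suc (2*m))" by (auto simp: xa_def outcomes_def)
lemma xb_out: "xb m \<in> outcomes (Suc (2*m))" by (auto simp: xb_def outcomes_def)

lemma ones_xa: "ones (Suc (2*m)) (xa m) = Suc m"
proof -
  have "{j \<in> {0..<Suc (2*m)}. xa m j} = {0..<Suc m}" by (auto simp: xa_def)
  then show ?thesis by (simp add: ones_def)
qed

lemma ones_xb: "ones (Suc (2*m)) (xb m) = m"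
proof -
  have "{j \<in> {0..<Suc (2*m)}. xb m j} = {1..<Suc m}" by (auto simp: xb_def)
  then show ?thesis by (simp add: ones_def)
qed

lemma pi1_props: "distinct (pi1 m)" "set (pi1 m) = {0..<Suc (2*m)}" "length (pi1 m) = Suc (2*m)"
  "set (take (Suc m) (pi1 m)) = {0..<Suc m}"
proof -
  show "distinct (pi1 m)" "set (pi1 m) = {0..<Suc (2*m)}" "length (pi1 m) = Suc (2*m)"
    by (auto simp: pi1_def)
  have "take (Suc m) (pi1 m) = [0..<Suc m]" unfolding pi1_def by (subst take_upt) auto
  then show "set (take (Suc m) (pi1 m)) = {0..<Suc m}" by (simp only: set_upt)
qed

lemma pi0_props: "distinct (pi0 m)" "set (pi0 m) = {0..<Suc (2*m)}" "length (pi0 m) = Suc (2*m)"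
  "set (take (Suc m) (pi0 m)) = insert 0 {Suc m..<Suc (2*m)}"
  by (auto simp: pi0_def)

lemma det_a:
  assumes "determined [0, Suc m] (Suc (2*m)) (restrict_hist (xa m) C)"
  shows "{0..<Suc m} \<subseteq> C"
proof
  fix j assume j: "j \<in> {0..<Suc m}"
  show "j \<in> C"
  proof (rule ccontr)
    assume "j \<notin> C"
    let ?y = "(xa m)(j := False)"
    have yo: "?y \<in> outcomes (Suc (2*m))" using xa_out[of m] by (auto simp: outcomes_def)
    have "consistent (restrict_hist (xa m) C) ?y" using \<open>j \<notin> C\<close> by auto
    moreover have "consistent (restrict_hist (xa m) C) (xa m)" by auto
    ultimately have "score [0, Suc m] (Suc (2*m)) (xa m) = score [0, Suc m] (Suc (2*m)) ?y"
      using assms xa_out[of m] yo unfolding determined_def by blast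
    moreover have "{i \<in> {0..<Suc (2*m)}. ?y i} = {0..<Suc m} - {j}" using j by (auto simp: xa_def)
    then have "ones (Suc (2*m)) ?y = m" using j by (simp add: ones_def)
    ultimately show False by (simp add: score2 ones_xa)
  qed
qed

lemma det_b:
  assumes "determined [0, Suc m] (Suc (2*m)) (restrict_hist (xb m) C)"
  shows "insert 0 {Suc m..<Suc (2*m)} \<subseteq> C"
proof
  fix j assume j: "j \<in> insert 0 {Suc m..<Suc (2*m)}"
  show "j \<in> C"
  proof (rule ccontr)
    assume "j \<notin> C"
    let ?y = "(xb m)(j := True)"
    have yo: "?y \<in> outcomes (Suc (2*m))" using xb_out[of m] j by (auto simp: outcomes_def)
    have "consistent (restrict_hist (xb m) C) ?y" using \<open>j \<notin> C\<close> by auto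
    moreover have "consistent (restrict_hist (xb m) C) (xb m)" by auto
    ultimately have sc: "score [0, Suc m] (Suc (2*m)) (xb m) = score [0, Suc m] (Suc (2*m)) ?y"
      using assms xb_out[of m] yo unfolding determined_def by blast
    have "{i \<in> {0..<Suc (2*m)}. ?y i} = insert j {1..<Suc m}" using j by (auto simp: xb_def)
    moreover have "j \<notin> {1..<Suc m}" using j by auto
    ultimately have "ones (Suc (2*m)) ?y = Suc m" by (simp add: ones_def)
    then show False using sc by (simp add: score2 ones_xb)
  qed
qed

lemma detA: "determined [0, Suc m] (Suc (2*m)) (restrict_hist (xa m) {0..<Suc m})"
  unfolding determined_def
proof (intro ballI impI)
  fix x y assume xy: "x \<in> outcomes (Suc (2*m))" "y \<in> outcomes (Suc (2*m))"
    "consistent (restrict_hist (xa m) {0..<Suc m}) x \<and> consistent (restrict_hist (xa m) {0..<Suc m}) y"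
  have "Suc m \<le> ones (Suc (2*m)) z" if "\<forall>j\<in>{0..<Suc m}. z j = xa m j" for z
  proof -
    have "{0..<Suc m} \<subseteq> {j \<in> {0..<Suc (2*m)}. z j}" using that by (auto simp: xa_def)
    from card_mono[OF _ this] show ?thesis by (simp add: ones_def)
  qed
  then show "score [0, Suc m] (Suc (2*m)) x = score [0, Suc m] (Suc (2*m)) y"
    using xy by (simp add: score2)
qed

lemma detB: "determined [0, Suc m] (Suc (2*m)) (restrict_hist (xb m) (insert 0 {Suc m..<Suc (2*m)}))"
  unfolding determined_def
proof (intro ballI impI)
  fix x y assume xy: "x \<in> outcomes (Suc (2*m))" "y \<in> outcomes (Suc (2*m))"
    "consistent (restrict_hist (xb m) (insert 0 {Suc m..<Suc (2*m)})) x \<and>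
     consistent (restrict_hist (xb m) (insert 0 {Suc m..<Suc (2*m)})) y"
  have "ones (Suc (2*m)) z \<le> m" if "\<forall>j\<in>insert 0 {Suc m..<Suc (2*m)}. z j = xb m j" for z
  proof -
    have "{j \<in> {0..<Suc (2*m)}. z j} \<subseteq> {1..<Suc m}"
    proof
      fix x assume x: "x \<in> {j \<in> {0..<Suc (2*m)}. z j}"
      have "z 0 = xb m 0" using that by blast
      then have "\<not> z 0" by (simp add: xb_def)
      then have "x \<noteq> 0" using x by (metis (no_types, lifting) mem_Collect_eq)
      moreover have "\<not> Suc m \<le> x" using that x by (auto simp: xb_def)
      ultimately show "x \<in> {1..<Suc m}" by auto
    qed
    from card_mono[OF _ this] show ?thesis by (simp add: ones_def)
  qed
  then have "ones (Suc (2*m)) x \<le> m" "ones (Suc (2*m)) y \<le> m" using xy by auto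
  then show "score [0, Suc m] (Suc (2*m)) x = score [0, Suc m] (Suc (2*m)) y"
    by (simp add: score2)
qed

lemma hd_filter_take:
  "distinct \<pi> \<Longrightarrow> i < length \<pi> \<Longrightarrow> hd (filter (\<lambda>j. j \<notin> set (take i \<pi>)) \<pi>) = \<pi> ! i"
  by (simp add: filter_take hd_drop_conv_nth)

lemma sig_a: "\<forall>i<Suc m. sig m (restrict_hist (xa m) (set (take i (pi1 m)))) = pi1 m ! i"
proof (intro allI impI)
  fix i assume i: "i < Suc m"
  show "sig m (restrict_hist (xa m) (set (take i (pi1 m)))) = pi1 m ! i"
  proof (cases "i = 0")
    case True then show ?thesis by (simp add: sig_def restrict_hist_def pi1_def pi0_def del: upt_Suc)
  next
    case False
    then have "0 \<in> set (take i (pi1 m))" using i by (auto simp: pi1_def)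
    then have "restrict_hist (xa m) (set (take i (pi1 m))) 0 = Some True" by (simp add: restrict_hist_def xa_def)
    then show ?thesis using i pi1_props[of m] by (simp add: sig_def hd_filter_take)
  qed
qed

lemma sig_b: "\<forall>i<Suc m. sig m (restrict_hist (xb m) (set (take i (pi0 m)))) = pi0 m ! i"
proof (intro allI impI)
  fix i assume i: "i < Suc m"
  have "restrict_hist (xb m) (set (take i (pi0 m))) 0 \<noteq> Some True" by (simp add: restrict_hist_def xb_def)
  then show "sig m (restrict_hist (xb m) (set (take i (pi0 m)))) = pi0 m ! i"
    using i pi0_props[of m] by (simp add: sig_def hd_filter_take)
qed

lemma sig_valid: "valid_adaptive t (Suc (2*m)) (sig m)"
  unfolding valid_adaptive_def
proof (intro allI impI)
  fix h assume h: "dom h \<subseteq> {0..<Suc (2*m)} \<and> \<not> determined t (Suc (2*m)) h"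
  let ?l = "if h 0 = Some True then pi1 m else pi0 m"
  have "set ?l = {0..<Suc (2*m)}" using pi1_props pi0_props by simp
  have "filter (\<lambda>j. j \<notin> dom h) ?l \<noteq> []"
  proof
    assume "filter (\<lambda>j. j \<notin> dom h) ?l = []"
    then have "{0..<Suc (2*m)} \<subseteq> dom h" using \<open>set ?l = _\<close> by (auto simp: filter_empty_conv)
    then show False using h determined_full by blast
  qed
  then have "sig m h \<in> set (filter (\<lambda>j. j \<notin> dom h) ?l)" unfolding sig_def by (rule hd_in_set)
  then show "sig m h < Suc (2*m) \<and> sig m h \<notin> dom h" using \<open>set ?l = _\<close> by auto
qed

definition "pp (m::nat) (\<delta>::real) j = (if j = 0 then 1/2 else if j \<le> m then 1 - \<delta> else \<delta>)"

lemma prob_nonneg: "(\<And>j. j < n \<Longrightarrow> 0 \<le> p j \<and> p j \<le> 1) \<Longrightarrow> 0 \<le> prob p n x"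
  unfolding prob_def by (rule prod_nonneg) auto

lemma prob_xa: "prob (pp m \<delta>) (Suc (2*m)) (xa m) = (1 - \<delta>) ^ (2*m) / 2"
proof -
  have "(\<Prod>i<2*m. if xa m (Suc i) then pp m \<delta> (Suc i) else 1 - pp m \<delta> (Suc i)) = (\<Prod>i<2*m. (1 - \<delta>))"
    by (rule prod.cong) (auto simp: xa_def pp_def)
  then have "prob (pp m \<delta>) (Suc (2*m)) (xa m) = (1/2) * (\<Prod>i<2*m. (1 - \<delta>))"
    unfolding prob_def prod.lessThan_Suc_shift by (simp add: xa_def pp_def)
  then show ?thesis by simp
qed

lemma prob_xb: "prob (pp m \<delta>) (Suc (2*m)) (xb m) = (1 - \<delta>) ^ (2*m) / 2"
proof -
  have "(\<Prod>i<2*m. if xb m (Suc i) then pp m \<delta> (Suc i) else 1 - pp m \<delta> (Suc i)) = (\<Prod>i<2*m. (1 - \<delta>))"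
    by (rule prod.cong) (auto simp: xb_def pp_def)
  then have "prob (pp m \<delta>) (Suc (2*m)) (xb m) = (1/2) * (\<Prod>i<2*m. (1 - \<delta>))"
    unfolding prob_def prod.lessThan_Suc_shift by (simp add: xb_def pp_def)
  then show ?thesis by simp
qed

lemma na_stop_det:
  assumes "valid_nonadaptive n \<pi>"
  shows "determined t n (restrict_hist x (set (take (na_stop t n \<pi> x) \<pi>)))"
proof -
  have "length \<pi> = n" using assms distinct_card[of \<pi>] by (auto simp: valid_nonadaptive_def)
  then have "determined t n (restrict_hist x (set (take n \<pi>)))"
    using assms by (intro determined_full) (auto simp: valid_nonadaptive_def)
  then show ?thesis unfolding na_stop_def by (rule LeastI)
qed

lemma na_cost_unit: "na_cost (\<lambda>_. 1) t n \<pi> x = real (card (set (take (na_stop t n \<pi> x) \<pi>)))"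
  by (simp add: na_cost_def)

lemma na_lower:
  assumes v: "valid_nonadaptive (Suc (2*m)) \<pi>" and p: "\<And>j. j < Suc (2*m) \<Longrightarrow> 0 \<le> p j \<and> p j \<le> 1"
  shows "prob p (Suc (2*m)) (xa m) * real (Suc m) + prob p (Suc (2*m)) (xb m) * real (Suc (2*m))
           \<le> expected_nonadaptive (\<lambda>_. 1) p [0, Suc m] (Suc (2*m)) \<pi>
        \<or> prob p (Suc (2*m)) (xa m) * real (Suc (2*m)) + prob p (Suc (2*m)) (xb m) * real (Suc m)
           \<le> expected_nonadaptive (\<lambda>_. 1) p [0, Suc m] (Suc (2*m)) \<pi>"
proof -
  let ?n = "Suc (2*m)" and ?t = "[0, Suc m]"
  let ?f = "\<lambda>x. prob p ?n x * na_cost (\<lambda>_. 1) ?t ?n \<pi> x"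
  define s1 where "s1 = na_stop ?t ?n \<pi> (xa m)"
  define s2 where "s2 = na_stop ?t ?n \<pi> (xb m)"
  have c1: "{0..<Suc m} \<subseteq> set (take s1 \<pi>)"
    using det_a na_stop_det[OF v] unfolding s1_def by blast
  have c2: "insert 0 {Suc m..<?n} \<subseteq> set (take s2 \<pi>)"
    using det_b na_stop_det[OF v] unfolding s2_def by blast
  have ne: "xa m \<noteq> xb m" by (auto simp: xa_def xb_def fun_eq_iff)
  have "(\<Sum>x\<in>{xa m, xb m}. ?f x) \<le> (\<Sum>x\<in>outcomes ?n. ?f x)"
    using xa_out xb_out finite_outcomes
    by (intro sum_mono2) (auto intro!: mult_nonneg_nonneg prob_nonneg p simp: na_cost_def)
  then have E: "?f (xa m) + ?f (xb m) \<le> expected_nonadaptive (\<lambda>_. 1) p ?t ?n \<pi>"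
    using ne by (simp add: expected_nonadaptive_def)
  have pa: "0 \<le> prob p ?n (xa m)" "0 \<le> prob p ?n (xb m)" using p by (auto intro: prob_nonneg)
  have ca: "Suc m \<le> card (set (take s1 \<pi>))"
    using card_mono[OF _ c1] by simp
  have cb: "Suc m \<le> card (set (take s2 \<pi>))"
    using card_mono[OF _ c2] by simp
  have all: "{0..<?n} \<subseteq> {0..<Suc m} \<union> insert 0 {Suc m..<?n}" by auto
  show ?thesis
  proof (cases "s1 \<le> s2")
    case True
    have "{0..<Suc m} \<subseteq> set (take s2 \<pi>)" using c1 set_take_subset_set_take[OF True] by (rule subset_trans)
    then have "{0..<?n} \<subseteq> set (take s2 \<pi>)" using c2 all by (meson Un_least subset_trans)
    from card_mono[OF finite_set this] have "?n \<le> card (set (take s2 \<pi>))" by simp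
    then have "?f (xa m) + ?f (xb m) \<ge> prob p ?n (xa m) * real (Suc m) + prob p ?n (xb m) * real ?n"
      using ca pa unfolding na_cost_unit s1_def[symmetric] s2_def[symmetric]
      by (intro add_mono mult_left_mono) auto
    then show ?thesis using E by linarith
  next
    case False
    then have "s2 \<le> s1" by simp
    have "insert 0 {Suc m..<?n} \<subseteq> set (take s1 \<pi>)" using c2 set_take_subset_set_take[OF \<open>s2 \<le> s1\<close>] by (rule subset_trans)
    then have "{0..<?n} \<subseteq> set (take s1 \<pi>)" using c1 all by (meson Un_least subset_trans)
    from card_mono[OF finite_set this] have "?n \<le> card (set (take s1 \<pi>))" by simp
    then have "?f (xa m) + ?f (xb m) \<ge> prob p ?n (xa m) * real ?n + prob p ?n (xb m) * real (Suc m)"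
      using cb pa unfolding na_cost_unit s1_def[symmetric] s2_def[symmetric]
      by (intro add_mono mult_left_mono) auto
    then show ?thesis using E by linarith
  qed
qed

lemma ad_cost_unit: "adaptive_cost (\<lambda>_. 1) t n \<sigma> x = real (card (dom (run t n \<sigma> x n Map.empty)))"
  by (simp add: adaptive_cost_def)

lemma empty_restrict: "Map.empty = restrict_hist x (set (take 0 \<pi>))"
  by (simp add: restrict_hist_def)

lemma cost_a: "adaptive_cost (\<lambda>_. 1) [0, Suc m] (Suc (2*m)) (sig m) (xa m) \<le> Suc m"
proof -
  have "dom (run [0, Suc m] (Suc (2*m)) (sig m) (xa m) (Suc (2*m)) (restrict_hist (xa m) (set (take 0 (pi1 m)))))
     \<subseteq> set (take (Suc m) (pi1 m))"
    by (rule run_prefix[OF sig_a]) (use detA pi1_props in auto)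
  then have "card (dom (run [0, Suc m] (Suc (2*m)) (sig m) (xa m) (Suc (2*m)) Map.empty)) \<le> card (set (take (Suc m) (pi1 m)))"
    by (simp only: empty_restrict[symmetric]) (rule card_mono, auto)
  also have "\<dots> \<le> Suc m" using card_length[of "take (Suc m) (pi1 m)"] by simp
  finally show ?thesis by (simp add: ad_cost_unit)
qed

lemma cost_b: "adaptive_cost (\<lambda>_. 1) [0, Suc m] (Suc (2*m)) (sig m) (xb m) \<le> Suc m"
proof -
  have "dom (run [0, Suc m] (Suc (2*m)) (sig m) (xb m) (Suc (2*m)) (restrict_hist (xb m) (set (take 0 (pi0 m)))))
     \<subseteq> set (take (Suc m) (pi0 m))"
    by (rule run_prefix[OF sig_b]) (use detB pi0_props in auto)
  then have "card (dom (run [0, Suc m] (Suc (2*m)) (sig m) (xb m) (Suc (2*m)) Map.empty)) \<le> card (set (take (Suc m) (pi0 m)))"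
    by (simp only: empty_restrict[symmetric]) (rule card_mono, auto)
  also have "\<dots> \<le> Suc m" using card_length[of "take (Suc m) (pi0 m)"] by simp
  finally show ?thesis by (simp add: ad_cost_unit)
qed

lemma cost_le_n: "valid_adaptive t n \<sigma> \<Longrightarrow> adaptive_cost (\<lambda>_. 1) t n \<sigma> x \<le> n"
proof -
  assume v: "valid_adaptive t n \<sigma>"
  have "dom (run t n \<sigma> x n Map.empty) \<subseteq> {0..<n}" by (rule run_dom[OF v]) simp
  from card_mono[OF _ this] show ?thesis by (simp add: ad_cost_unit)
qed

lemma ad_upper:
  assumes p: "\<And>j. j < Suc (2*m) \<Longrightarrow> 0 \<le> p j \<and> p j \<le> 1"
  shows "expected_adaptive (\<lambda>_. 1) p [0, Suc m] (Suc (2*m)) (sig m)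
     \<le> (prob p (Suc (2*m)) (xa m) + prob p (Suc (2*m)) (xb m)) * real (Suc m)
       + real (Suc (2*m)) * (1 - prob p (Suc (2*m)) (xa m) - prob p (Suc (2*m)) (xb m))"
proof -
  let ?n = "Suc (2*m)" and ?t = "[0, Suc m]"
  let ?f = "\<lambda>x. prob p ?n x * adaptive_cost (\<lambda>_. 1) ?t ?n (sig m) x"
  let ?O = "outcomes ?n" and ?B = "{xa m, xb m}"
  have ne: "xa m \<noteq> xb m" by (auto simp: xa_def xb_def fun_eq_iff)
  have B: "?B \<subseteq> ?O" using xa_out xb_out by auto
  have split: "(\<Sum>x\<in>?O. g x) = (\<Sum>x\<in>?O - ?B. g x) + (\<Sum>x\<in>?B. g x)" for g :: "_ \<Rightarrow> real"
    using sum.subset_diff[OF B finite_outcomes] by simp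
  have "(\<Sum>x\<in>?O - ?B. ?f x) \<le> (\<Sum>x\<in>?O - ?B. prob p ?n x * real ?n)"
  proof (rule sum_mono, rule mult_left_mono)
    fix x show "adaptive_cost (\<lambda>_. 1) ?t ?n (sig m) x \<le> real ?n" by (rule cost_le_n[OF sig_valid])
    show "0 \<le> prob p ?n x" by (rule prob_nonneg[OF p])
  qed
  also have "\<dots> = real ?n * (1 - prob p ?n (xa m) - prob p ?n (xb m))"
  proof -
    have "(\<Sum>x\<in>?O - ?B. prob p ?n x) = 1 - prob p ?n (xa m) - prob p ?n (xb m)"
      using split[of "prob p ?n"] sum_prob[of ?n p] p ne by simp
    then show ?thesis by (simp add: sum_distrib_left[symmetric] mult.commute)
  qed
  finally have 1: "(\<Sum>x\<in>?O - ?B. ?f x) \<le> real ?n * (1 - prob p ?n (xa m) - prob p ?n (xb m))" .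
  have "?f (xa m) \<le> prob p ?n (xa m) * real (Suc m)"
    by (rule mult_left_mono) (use cost_a prob_nonneg p in auto)
  moreover have "?f (xb m) \<le> prob p ?n (xb m) * real (Suc m)"
    by (rule mult_left_mono) (use cost_b prob_nonneg p in auto)
  ultimately have 2: "(\<Sum>x\<in>?B. ?f x) \<le> (prob p ?n (xa m) + prob p ?n (xb m)) * real (Suc m)"
    using ne by (simp add: algebra_simps)
  show ?thesis using 1 2 split[of ?f] unfolding expected_adaptive_def by linarith
qed

lemma arith_aux: "0 \<le> b \<Longrightarrow> 1 \<le> a \<Longrightarrow> 3 * c + u \<le> 1 / 2 \<Longrightarrow>
 3 / 2 * (M + 1) + 3 / 2 * c - a - b \<le> (3 * M + 2) / 2 - 3 / 2 * c - (u::real)"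
  by (simp add: field_simps)

theorem theorem3:
  fixes \<epsilon> :: real
  assumes "\<epsilon> > 0"
  shows "\<exists>(n::nat) (k::nat) (p::nat \<Rightarrow> real).
           valid_thresholds [0, k] n \<and> 0 < k \<and> k \<le> n \<and>
           (\<forall>j<n. 0 < p j \<and> p j < 1) \<and>
           OPT_na (\<lambda>_. 1) p [0, k] n \<ge> (3/2 - \<epsilon>) * OPT (\<lambda>_. 1) p [0, k] n"
proof -
  define m :: nat where "m = nat \<lceil>1/\<epsilon>\<rceil> + 2"
  define \<delta> :: real where "\<delta> = 1 / (16 * (real m + 1)^2)"
  define e where "e = min \<epsilon> (1/2)"
  define n where "n = Suc (2*m)"
  define p where "p = pp m \<delta>"
  define Q where "Q = (1 - \<delta>) ^ (2*m) / 2"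
  define u where "u = 1 - 2*Q"
  have m1: "1/\<epsilon> \<le> real m + 1" unfolding m_def by linarith
  have m2: "2 \<le> real m + 1" unfolding m_def by simp
  have em: "1 \<le> e * (real m + 1)"
  proof (cases "\<epsilon> \<le> 1/2")
    case True
    then have "e = \<epsilon>" by (simp add: e_def)
    then show ?thesis using m1 assms by (simp add: field_simps)
  next
    case False
    then show ?thesis using m2 by (simp add: e_def)
  qed
  have e0: "0 < e" "e \<le> \<epsilon>" "e \<le> 1/2" using assms by (auto simp: e_def)
  have "1 \<le> (real m + 1)^2" by (rule one_le_power) simp
  then have "1 \<le> (1 + real m)^2" by (simp add: add.commute)
  then have s16: "1 < 16 * (1 + real m)^2" by linarith
  have d0: "0 < \<delta>" "\<delta> < 1" unfolding \<delta>_def using s16 by (auto simp: field_simps)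
  have pj: "\<forall>j<n. 0 < p j \<and> p j < 1" using d0 by (auto simp: p_def pp_def)
  have pj': "\<And>j. j < n \<Longrightarrow> 0 \<le> p j \<and> p j \<le> 1" using pj by fastforce
  have pa: "prob p n (xa m) = Q" "prob p n (xb m) = Q" unfolding p_def n_def Q_def by (simp_all only: prob_xa prob_xb)
  have "1 + real (2*m) * (-\<delta>) \<le> (1 + (-\<delta>)) ^ (2*m)" by (rule Bernoulli_inequality) (use d0 in simp)
  then have u1: "u \<le> 2 * real m * \<delta>" unfolding u_def Q_def by simp
  have "(1 - \<delta>) ^ (2*m) \<le> 1" by (rule power_le_one) (use d0 in auto)
  then have u0: "0 \<le> u" unfolding u_def Q_def by simp
  have "2 * real m * \<delta> * (3 * real m + 1) \<le> 1/2"
  proof -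
    have "4 * real m * (3 * real m + 1) \<le> 16 * (real m + 1)^2" by (simp add: power2_eq_square algebra_simps)
    then show ?thesis unfolding \<delta>_def by (simp add: field_simps)
  qed
  then have h3: "3 * (u * real m) + u \<le> 1/2"
    using mult_right_mono[OF u1, of "3 * real m + 1"] by (simp add: algebra_simps)
  have vna: "valid_nonadaptive n (pi1 m)" using pi1_props by (simp add: valid_nonadaptive_def n_def)
  have L: "Q * (3 * real m + 2) \<le> OPT_na (\<lambda>_. 1) p [0, Suc m] n"
    unfolding OPT_na_def
  proof (rule cInf_greatest)
    show "expected_nonadaptive (\<lambda>_. 1) p [0, Suc m] n ` {\<pi>. valid_nonadaptive n \<pi>} \<noteq> {}" using vna by blast
  next
    fix y assume "y \<in> expected_nonadaptive (\<lambda>_. 1) p [0, Suc m] n ` {\<pi>. valid_nonadaptive n \<pi>}"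
    then obtain \<pi> where v: "valid_nonadaptive n \<pi>" and y: "y = expected_nonadaptive (\<lambda>_. 1) p [0, Suc m] n \<pi>" by auto
    from na_lower[of m \<pi> p] v pj' pa show "Q * (3 * real m + 2) \<le> y" unfolding y n_def
      by (auto simp: algebra_simps)
  qed
  have vs: "valid_adaptive [0, Suc m] n (sig m)" unfolding n_def by (rule sig_valid)
  have nonneg: "0 \<le> expected_adaptive (\<lambda>_. 1) p [0, Suc m] n \<sigma>" for \<sigma>
    unfolding expected_adaptive_def
    by (rule sum_nonneg, rule mult_nonneg_nonneg) (simp_all add: prob_nonneg[OF pj'] adaptive_cost_def)
  let ?X = "expected_adaptive (\<lambda>_. 1) p [0, Suc m] n ` {\<sigma>. valid_adaptive [0, Suc m] n \<sigma>}"
  have bdd: "bdd_below ?X" using nonneg by (auto simp: bdd_below_def)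
  have "OPT (\<lambda>_. 1) p [0, Suc m] n \<le> expected_adaptive (\<lambda>_. 1) p [0, Suc m] n (sig m)"
    unfolding OPT_def by (rule cInf_lower[OF _ bdd]) (use vs in blast)
  also have "\<dots> \<le> (real m + 1) + u * real m"
    using ad_upper[of m p] pj' pa unfolding n_def u_def by (simp add: algebra_simps)
  finally have U: "OPT (\<lambda>_. 1) p [0, Suc m] n \<le> (real m + 1) + u * real m" .
  have O0: "0 \<le> OPT (\<lambda>_. 1) p [0, Suc m] n"
    unfolding OPT_def by (rule cInf_greatest) (use vs nonneg in auto)
  let ?A = "OPT (\<lambda>_. 1) p [0, Suc m] n"
  have "(3/2 - \<epsilon>) * ?A \<le> (3/2 - e) * ?A" using O0 e0 by (intro mult_right_mono) auto
  also have "\<dots> \<le> (3/2 - e) * ((real m + 1) + u * real m)" using U e0 by (intro mult_left_mono) auto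
  also have "\<dots> = 3/2 * (real m + 1) + 3/2 * (u * real m) - e * (real m + 1) - e * (u * real m)"
    by (simp only: left_diff_distrib distrib_left diff_diff_eq)
  also have "\<dots> \<le> (3 * real m + 2)/2 - 3/2 * (u * real m) - u"
    by (rule arith_aux) (use e0 u0 em h3 in auto)
  also have "\<dots> = Q * (3 * real m + 2)"
    unfolding u_def by (simp add: algebra_simps)
  also have "\<dots> \<le> OPT_na (\<lambda>_. 1) p [0, Suc m] n" by (rule L)
  finally have fin: "(3/2 - \<epsilon>) * ?A \<le> OPT_na (\<lambda>_. 1) p [0, Suc m] n" .
  have vt: "valid_thresholds [0, Suc m] n" by (simp add: valid_thresholds_def n_def)
  show ?thesis
    by (rule exI[of _ n], rule exI[of _ "Suc m"], rule exI[of _ p]) (use vt pj fin in \<open>auto simp: n_def\<close>)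
qed

end
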